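(* For every $n\ge1$ and $\epsilon>0$ there is a quantum algorithm that $\epsilon$-tests the Pauli group $\mathcal{P}_n$ using $O(1/\epsilon^2)$ queries to $U$, with implied constant independent of $n$ and $\epsilon$.
   Context: $n\ge1$, $N=2^n$. Pauli matrices $\sigma_0=I,\sigma_1=X,\sigma_2=Y,\sigma_3=Z$; for $\vec{x}\in\mathbb{Z}_4^n$, $\sigma_{\vec{x}}=\sigma_{x_1}\otimes\cdots\otimes\sigma_{x_n}$. $\mathcal{P}_n=\{i^k\sigma_{\vec{x}}: k\in\{0,1,2,3\},\vec{x}\in\mathbb{Z}_4^n\}$. $\|A\|=\sqrt{\mathrm{tr}(A^\dagger A)}$; $D(A,B)=\min_{\theta\in[0,2\pi)}\frac{1}{\sqrt{2N}}\|e^{i\theta}A-B\|$; $D(A,\mathcal{S})=\inf_{B\in\mathcal{S}}D(A,B)$. For $\mathcal{S}\subseteq\mathbb{U}_N$ (the $N\times N$ unitaries), $U$ has property $\mathcal{S}$ if $U=e^{i\theta}V$ for some $V\in\mathcal{S}$, real $\theta$; $U$ is $\epsilon$-far from $\mathcal{S}$ if $D(U,V)\ge\epsilon$ for all $V\in\mathcal{S}$. Testing model: the unknown $U\in\mathbb{U}_N$ is a black box; the algorithm may prepare arbitrary states on the system plus an ancilla, apply $U\otimes I$ (one query each), interleaved with arbitrary fixed quantum operations, and measure. It $\epsilon$-tests $\mathcal{S}$ if for every $U\in\mathbb{U}_N$ it accepts with probability $\ge2/3$ when $U$ has property $\mathcal{S}$ and with probability $\le1/3$ when $U$ is $\epsilon$-far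 from $\mathcal{S}$. *)

theory Defs
  imports Complex_Main "Jordan_Normal_Form.Matrix"
begin

definition ctrans :: "complex mat \<Rightarrow> complex mat" where
  "ctrans A = mat (dim_col A) (dim_row A) (\<lambda>(i,j). cnj (A $$ (j,i)))"

definition unitary_mat :: "nat \<Rightarrow> complex mat \<Rightarrow> bool" where
  "unitary_mat d A \<longleftrightarrow> A \<in> carrier_mat d d \<and> ctrans A * A = 1\<^sub>m d \<and> A * ctrans A = 1\<^sub>m d"

definition kron :: "complex mat \<Rightarrow> complex mat \<Rightarrow> complex mat" where
  "kron A B = mat (dim_row A * dim_row B) (dim_col A * dim_col B)
     (\<lambda>(i,j). A $$ (i div dim_row B, j div dim_col B) * B $$ (i mod dim_row B, j mod dim_col B))"

definition frob_norm :: "complex mat \<Rightarrow> real" where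
  "frob_norm A = sqrt (Re (\<Sum>i<dim_col A. (ctrans A * A) $$ (i,i)))"

definition cvec_norm :: "complex vec \<Rightarrow> real" where
  "cvec_norm v = sqrt (\<Sum>i<dim_vec v. (cmod (v $ i))\<^sup>2)"

definition pauli1 :: "nat \<Rightarrow> complex mat" where
  "pauli1 a = (if a = 0 then mat_of_rows_list 2 [[1,0],[0,1]]
          else if a = 1 then mat_of_rows_list 2 [[0,1],[1,0]]
          else if a = 2 then mat_of_rows_list 2 [[0,-\<i>],[\<i>,0]]
          else mat_of_rows_list 2 [[1,0],[0,-1]])"

fun pauli_string :: "nat list \<Rightarrow> complex mat" where
  "pauli_string [] = 1\<^sub>m 1"
| "pauli_string (a # as) = kron (pauli1 a) (pauli_string as)"

definition pauli_group :: "nat \<Rightarrow> complex mat set" where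
  "pauli_group n = {(\<i> ^ k) \<cdot>\<^sub>m pauli_string xs | k xs.
       k < 4 \<and> length xs = n \<and> set xs \<subseteq> {0..<4}}"

definition phase_dist :: "nat \<Rightarrow> complex mat \<Rightarrow> complex mat \<Rightarrow> real" where
  "phase_dist n A B = (INF \<theta>\<in>{0..<2*pi}.
       frob_norm (exp (\<i> * complex_of_real \<theta>) \<cdot>\<^sub>m A - B) / sqrt (2 * 2 ^ n))"

definition has_property :: "nat \<Rightarrow> complex mat set \<Rightarrow> complex mat \<Rightarrow> bool" where
  "has_property n S U \<longleftrightarrow> (\<exists>\<theta>::real. \<exists>V\<in>S. U = exp (\<i> * complex_of_real \<theta>) \<cdot>\<^sub>m V)"

definition eps_far :: "nat \<Rightarrow> real \<Rightarrow> complex mat set \<Rightarrow> complex mat \<Rightarrow> bool" where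
  "eps_far n \<epsilon> S U \<longleftrightarrow> (\<forall>V\<in>S. phase_dist n U V \<ge> \<epsilon>)"

text \<open>A query algorithm on an n-qubit system with an ancilla of dimension m:
  initial unit state psi on C^(2^n * m), fixed unitaries W_0, ..., W_q on the joint space,
  and an accepting projector P.  On input U it produces
  W_q (U (x) I) W_{q-1} ... (U (x) I) W_0 psi  and accepts with probability ||P phi||^2.
  The number of queries is q = length of the list minus one.\<close>
record qalg =
  anc_dim :: nat
  init_state :: "complex vec"
  ops :: "complex mat list"
  accept_proj :: "complex mat"

definition valid_qalg :: "nat \<Rightarrow> qalg \<Rightarrow> bool" where
  "valid_qalg n A \<longleftrightarrow>
     (let d = 2 ^ n * anc_dim A in
       anc_dim A \<ge> 1 \<and>
       init_state A \<in> carrier_vec d \<and> cvec_norm (init_state A) = 1 \<and>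
       ops A \<noteq> [] \<and> (\<forall>W\<in>set (ops A). unitary_mat d W) \<and>
       accept_proj A \<in> carrier_mat d d \<and>
       ctrans (accept_proj A) = accept_proj A \<and>
       accept_proj A * accept_proj A = accept_proj A)"

definition num_queries :: "qalg \<Rightarrow> nat" where
  "num_queries A = length (ops A) - 1"

fun run_ops :: "complex mat \<Rightarrow> complex mat list \<Rightarrow> complex vec \<Rightarrow> complex vec" where
  "run_ops Q [] v = v"
| "run_ops Q (W # Ws) v = run_ops Q Ws (W *\<^sub>v (Q *\<^sub>v v))"

definition final_state :: "qalg \<Rightarrow> complex mat \<Rightarrow> complex vec" where
  "final_state A U =
     (let Q = kron U (1\<^sub>m (anc_dim A)) in
      run_ops Q (tl (ops A)) (hd (ops A) *\<^sub>v init_state A))"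

definition accept_prob :: "qalg \<Rightarrow> complex mat \<Rightarrow> real" where
  "accept_prob A U = (cvec_norm (accept_proj A *\<^sub>v final_state A U))\<^sup>2"

definition eps_tests :: "nat \<Rightarrow> real \<Rightarrow> complex mat set \<Rightarrow> qalg \<Rightarrow> bool" where
  "eps_tests n \<epsilon> S A \<longleftrightarrow>
     (\<forall>U. unitary_mat (2 ^ n) U \<longrightarrow>
        (has_property n S U \<longrightarrow> accept_prob A U \<ge> 2/3) \<and>
        (eps_far n \<epsilon> S U \<longrightarrow> accept_prob A U \<le> 1/3))"

end

theory Submission
  imports Defs
begin


definition dg :: "nat \<Rightarrow> nat \<Rightarrow> nat \<Rightarrow> nat" where
  "dg N d i = i div N ^ d mod N"

lemma dg_split:
  assumes "x < N ^ e" "N > 0"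
  shows "dg N d (x + N ^ e * y) = (if d < e then dg N d x else dg N (d - e) y)"
proof (cases "d < e")
  case True
  have "N ^ e = N ^ d * N ^ (e - d)" using True by (simp flip: power_add)
  hence "(x + N ^ e * y) div N ^ d = x div N ^ d + N ^ (e - d) * y"
    using assms by (simp add: mult.assoc)
  moreover have "N ^ (e - d) = N * N ^ (e - d - 1)" using True
    by (metis Suc_diff_Suc diff_Suc_1 power_Suc zero_less_diff)
  ultimately show ?thesis using True by (simp add: dg_def mult.assoc)
next
  case False
  have e: "N ^ d = N ^ e * N ^ (d - e)" using False by (simp flip: power_add)
  have "(x + N ^ e * y) div N ^ e = y" using assms by simp
  hence "(x + N ^ e * y) div N ^ d = y div N ^ (d - e)"
    by (simp add: e div_mult2_eq)
  thus ?thesis using False by (simp add: dg_def)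
qed

lemma sum_split_mult:
  fixes g :: "nat \<Rightarrow> 'a::comm_monoid_add"
  shows "(\<Sum>i<N * M. g i) = (\<Sum>a<N. \<Sum>b<M. g (b + M * a))"
proof -
  have bij: "bij_betw (\<lambda>(a,b). b + M * a) ({..<N} \<times> {..<M}) {..<N * M}"
  proof (rule bij_betw_byWitness[where f' = "\<lambda>i. (i div M, i mod M)"], goal_cases)
    case 1 thus ?case by auto
  next
    case 2 thus ?case by (simp add: add.commute)
  next
    case 3
    show ?case
    proof clarsimp
      fix a b assume "a < N" "b < M"
      hence "b + M * a < M + M * a" by simp
      also have "\<dots> = M * (Suc a)" by simp
      also have "\<dots> \<le> M * N" using \<open>a < N\<close> by (intro mult_le_mono2) simp
      finally show "b + M * a < N * M" by (simp add: mult.commute)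
    qed
  next
    case 4 thus ?case
      by (auto simp: less_mult_imp_div_less)
       (metis mod_less_divisor mult_zero_right not_gr_zero not_less_zero)
  qed
  have "(\<Sum>i<N * M. g i) = (\<Sum>p\<in>{..<N} \<times> {..<M}. g (case p of (a,b) \<Rightarrow> b + M * a))"
    using sum.reindex_bij_betw[OF bij, of g] by simp
  also have "\<dots> = (\<Sum>a<N. \<Sum>b<M. g (b + M * a))"
    by (simp add: sum.cartesian_product split_beta)
  finally show ?thesis .
qed

lemma dg_low: "b < N \<Longrightarrow> dg N 0 (b + N * a) = b"
  by (simp add: dg_def)
lemma dg_high: "b < N \<Longrightarrow> dg N (Suc s) (b + N * a) = dg N s a"
  using dg_split[of b N 1 "Suc s" a] by simp

lemma dig_pairs_aux:
  fixes f :: "nat \<Rightarrow> nat \<Rightarrow> 'a::comm_semiring_1"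
  assumes N: "N > 0"
  shows "(\<Sum>x<N^k. \<Sum>y<N^k. \<Prod>s<k. f (dg N s x) (dg N s y)) = (\<Sum>a<N. \<Sum>b<N. f a b) ^ k"
proof (induction k)
  case 0
  then show ?case by simp
next
  case (Suc k)
  let ?P = "\<lambda>x y. \<Prod>s<k. f (dg N s x) (dg N s y)"
  have "(\<Sum>x<N^Suc k. \<Sum>y<N^Suc k. \<Prod>s<Suc k. f (dg N s x) (dg N s y))
     = (\<Sum>a<N^k. \<Sum>b<N. \<Sum>a'<N^k. \<Sum>b'<N. \<Prod>s<Suc k. f (dg N s (b + N*a)) (dg N s (b' + N*a')))"
    by (simp only: power_Suc2 sum_split_mult)
  also have "\<dots> = (\<Sum>a<N^k. \<Sum>b<N. \<Sum>a'<N^k. \<Sum>b'<N. f b b' * ?P a a')"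
    by (intro sum.cong refl, subst prod.lessThan_Suc_shift) (simp add: dg_low dg_high)
  also have "\<dots> = (\<Sum>a<N^k. \<Sum>a'<N^k. \<Sum>b<N. \<Sum>b'<N. f b b' * ?P a a')"
    by (rule sum.cong[OF refl], rule sum.swap)
  also have "\<dots> = (\<Sum>a<N^k. \<Sum>a'<N^k. (\<Sum>b<N. \<Sum>b'<N. f b b') * ?P a a')"
    by (simp add: sum_distrib_right)
  also have "\<dots> = (\<Sum>b<N. \<Sum>b'<N. f b b') * (\<Sum>a<N^k. \<Sum>a'<N^k. ?P a a')"
    by (simp add: sum_distrib_left)
  also have "\<dots> = (\<Sum>a<N. \<Sum>b<N. f a b) ^ Suc k" using Suc by simp
  finally show ?case .
qed

lemma dig_pairs:
  fixes f :: "nat \<Rightarrow> nat \<Rightarrow> 'a::comm_semiring_1"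
  assumes N: "N > 0"
  shows "(\<Sum>i<N^(2*k). \<Prod>s<k. f (dg N s i) (dg N (k+s) i)) = (\<Sum>a<N. \<Sum>b<N. f a b) ^ k"
proof -
  have "(\<Sum>i<N^(2*k). \<Prod>s<k. f (dg N s i) (dg N (k+s) i))
      = (\<Sum>a<N^k. \<Sum>b<N^k. \<Prod>s<k. f (dg N s (b + N^k * a)) (dg N (k+s) (b + N^k * a)))"
    by (simp add: mult_2 power_add sum_split_mult)
  also have "\<dots> = (\<Sum>a<N^k. \<Sum>b<N^k. \<Prod>s<k. f (dg N s b) (dg N s a))"
    using N by (intro sum.cong refl prod.cong) (simp_all add: dg_split)
  also have "\<dots> = (\<Sum>b<N^k. \<Sum>a<N^k. \<Prod>s<k. f (dg N s b) (dg N s a))"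
    by (rule sum.swap)
  also have "\<dots> = (\<Sum>a<N. \<Sum>b<N. f a b) ^ k" by (rule dig_pairs_aux[OF N])
  finally show ?thesis .
qed



definition ip :: "'i set \<Rightarrow> ('i \<Rightarrow> complex) \<Rightarrow> ('i \<Rightarrow> complex) \<Rightarrow> complex" where
  "ip I f g = (\<Sum>i\<in>I. cnj (f i) * g i)"

definition orthonormal :: "'i set \<Rightarrow> 'x set \<Rightarrow> ('x \<Rightarrow> 'i \<Rightarrow> complex) \<Rightarrow> bool" where
  "orthonormal I X e \<longleftrightarrow> (\<forall>x\<in>X. \<forall>y\<in>X. ip I (e x) (e y) = (if x = y then 1 else 0))"

lemma cmod_sq_cnj: "complex_of_real ((cmod z)\<^sup>2) = cnj z * z"
  by (metis complex_norm_square mult.commute)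

lemma comb_norm:
  assumes on: "orthonormal I X e" and fX: "finite X"
  shows "(\<Sum>i\<in>I. (cmod (\<Sum>x\<in>X. e x i * b x))\<^sup>2) = (\<Sum>x\<in>X. (cmod (b x))\<^sup>2)"
proof -
  have "complex_of_real (\<Sum>i\<in>I. (cmod (\<Sum>x\<in>X. e x i * b x))\<^sup>2)
      = (\<Sum>i\<in>I. (\<Sum>x\<in>X. cnj (e x i) * cnj (b x)) * (\<Sum>y\<in>X. e y i * b y))"
    by (simp only: of_real_sum cmod_sq_cnj cnj_sum complex_cnj_mult)
  also have "\<dots> = (\<Sum>i\<in>I. \<Sum>x\<in>X. \<Sum>y\<in>X. cnj (b x) * b y * (cnj (e x i) * e y i))"
    by (simp add: sum_distrib_left sum_distrib_right mult_ac)
  also have "\<dots> = (\<Sum>x\<in>X. \<Sum>y\<in>X. cnj (b x) * b y * ip I (e x) (e y))"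
    unfolding ip_def
    by (subst sum.swap, rule sum.cong[OF refl], subst sum.swap) (simp add: sum_distrib_left)
  also have "\<dots> = (\<Sum>x\<in>X. \<Sum>y\<in>X. if x = y then cnj (b x) * b y else 0)"
    using on unfolding orthonormal_def by (intro sum.cong refl) auto
  also have "\<dots> = (\<Sum>x\<in>X. cnj (b x) * b x)"
    using fX by (simp add: sum.delta)
  also have "\<dots> = complex_of_real (\<Sum>x\<in>X. (cmod (b x))\<^sup>2)"
    by (simp only: of_real_sum cmod_sq_cnj)
  finally show ?thesis by (simp only: of_real_eq_iff)
qed

lemma bessel:
  assumes on: "orthonormal I X e" and fX: "finite X"
  shows "(\<Sum>x\<in>X. (cmod (ip I (e x) v))\<^sup>2) \<le> (\<Sum>i\<in>I. (cmod (v i))\<^sup>2)"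
proof -
  define a where "a x = ip I (e x) v" for x
  define S where "S i = (\<Sum>x\<in>X. e x i * a x)" for i
  have cv: "(\<Sum>i\<in>I. cnj (v i) * e x i) = cnj (a x)" for x
    by (simp add: a_def ip_def mult.commute)
  have cS1: "(\<Sum>i\<in>I. cnj (v i) * S i) = (\<Sum>x\<in>X. a x * cnj (a x))"
  proof -
    have "(\<Sum>i\<in>I. cnj (v i) * S i) = (\<Sum>x\<in>X. a x * (\<Sum>i\<in>I. cnj (v i) * e x i))"
      unfolding S_def by (simp add: sum_distrib_left sum_distrib_right mult_ac) (rule sum.swap)
    thus ?thesis by (simp add: cv)
  qed
  have cS2: "(\<Sum>i\<in>I. cnj (S i) * v i) = (\<Sum>x\<in>X. cnj (a x) * a x)"
  proof -
    have "(\<Sum>i\<in>I. cnj (S i) * v i) = cnj (\<Sum>i\<in>I. cnj (v i) * S i)"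
      by (simp only: cnj_sum complex_cnj_mult complex_cnj_cnj mult.commute)
    also have "\<dots> = (\<Sum>x\<in>X. cnj (a x) * a x)" by (subst cS1) (simp only: cnj_sum complex_cnj_mult complex_cnj_cnj mult.commute)
    finally show ?thesis .
  qed
  have cS3: "(\<Sum>i\<in>I. cnj (S i) * S i) = (\<Sum>x\<in>X. cnj (a x) * a x)"
  proof -
    have "complex_of_real (\<Sum>i\<in>I. (cmod (S i))\<^sup>2) = complex_of_real (\<Sum>x\<in>X. (cmod (a x))\<^sup>2)"
      unfolding S_def using comb_norm[OF on fX] by simp
    thus ?thesis by (simp only: of_real_sum cmod_sq_cnj)
  qed
  have "0 \<le> (\<Sum>i\<in>I. (cmod (v i - S i))\<^sup>2)" by (simp add: sum_nonneg)
  have E0: "complex_of_real (\<Sum>i\<in>I. (cmod (v i - S i))\<^sup>2) = (\<Sum>i\<in>I. cnj (v i - S i) * (v i - S i))"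
    by (simp only: of_real_sum cmod_sq_cnj)
  have "(\<Sum>i\<in>I. cnj (v i - S i) * (v i - S i))
     = (\<Sum>i\<in>I. cnj (v i) * v i) - (\<Sum>i\<in>I. cnj (v i) * S i) - (\<Sum>i\<in>I. cnj (S i) * v i)
       + (\<Sum>i\<in>I. cnj (S i) * S i)"
  proof -
    have "cnj (v i - S i) * (v i - S i) = cnj (v i) * v i - cnj (v i) * S i - cnj (S i) * v i + cnj (S i) * S i" for i
      by (simp add: algebra_simps)
    hence "(\<Sum>i\<in>I. cnj (v i - S i) * (v i - S i)) = (\<Sum>i\<in>I. cnj (v i) * v i - cnj (v i) * S i - cnj (S i) * v i + cnj (S i) * S i)"
      by (intro sum.cong refl)
    also have "\<dots> = (\<Sum>i\<in>I. cnj (v i) * v i) - (\<Sum>i\<in>I. cnj (v i) * S i) - (\<Sum>i\<in>I. cnj (S i) * v i)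
       + (\<Sum>i\<in>I. cnj (S i) * S i)"
      by (simp only: sum.distrib sum_subtractf)
    finally show ?thesis .
  qed
  also have "\<dots> = (\<Sum>i\<in>I. cnj (v i) * v i) - (\<Sum>x\<in>X. cnj (a x) * a x)"
  proof -
    have "(\<Sum>x\<in>X. a x * cnj (a x)) = (\<Sum>x\<in>X. cnj (a x) * a x)" by (simp only: mult.commute)
    thus ?thesis by (simp only: cS1 cS2 cS3) simp
  qed
  also have "\<dots> = complex_of_real ((\<Sum>i\<in>I. (cmod (v i))\<^sup>2) - (\<Sum>x\<in>X. (cmod (a x))\<^sup>2))"
    by (simp only: of_real_diff of_real_sum cmod_sq_cnj)
  finally have "complex_of_real (\<Sum>i\<in>I. (cmod (v i - S i))\<^sup>2) = complex_of_real ((\<Sum>i\<in>I. (cmod (v i))\<^sup>2) - (\<Sum>x\<in>X. (cmod (a x))\<^sup>2))"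
    using E0 by simp
  hence "(\<Sum>i\<in>I. (cmod (v i - S i))\<^sup>2) = (\<Sum>i\<in>I. (cmod (v i))\<^sup>2) - (\<Sum>x\<in>X. (cmod (a x))\<^sup>2)"
    by (simp only: of_real_eq_iff)
  with \<open>0 \<le> (\<Sum>i\<in>I. (cmod (v i - S i))\<^sup>2)\<close> show ?thesis by (simp add: a_def)
qed



definition mip :: "nat \<Rightarrow> complex mat \<Rightarrow> complex mat \<Rightarrow> complex" where
  "mip N A B = (\<Sum>a<N. \<Sum>b<N. cnj (A $$ (a,b)) * B $$ (a,b))"

lemma pauli1_carrier: "pauli1 a \<in> carrier_mat 2 2"
  unfolding pauli1_def mat_of_rows_list_def carrier_mat_def by (auto simp: numeral_2_eq_2)

lemma pauli_string_carrier: "pauli_string xs \<in> carrier_mat (2 ^ length xs) (2 ^ length xs)"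
  by (induction xs) (auto simp: kron_def pauli1_def mat_of_rows_list_def)

lemma kron_index:
  assumes "A \<in> carrier_mat p p" "B \<in> carrier_mat M M" "a < p" "a' < p" "b < M" "b' < M"
  shows "kron A B $$ (b + M * a, b' + M * a') = A $$ (a, a') * B $$ (b, b')"
proof -
  have "b + M * a < p * M"
  proof -
    have "b + M * a < M + M * a" using assms by simp
    also have "\<dots> = M * Suc a" by simp
    also have "\<dots> \<le> M * p" using assms by (intro mult_le_mono2) simp
    finally show ?thesis by (simp add: mult.commute)
  qed
  moreover have "b' + M * a' < p * M"
  proof -
    have "b' + M * a' < M + M * a'" using assms by simp
    also have "\<dots> = M * Suc a'" by simp
    also have "\<dots> \<le> M * p" using assms by (intro mult_le_mono2) simp
    finally show ?thesis by (simp add: mult.commute)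
  qed
  ultimately show ?thesis using assms by (simp add: kron_def)
qed

lemma kron_index':
  assumes "A \<in> carrier_mat p p" "B \<in> carrier_mat M M" "a < p" "a' < p" "b < M" "b' < M"
  shows "kron A B $$ (b + a * M, b' + a' * M) = A $$ (a, a') * B $$ (b, b')"
  using kron_index[OF assms] by (simp add: mult.commute)

lemma mip_kron:
  assumes "A \<in> carrier_mat p p" "B \<in> carrier_mat M M" "A' \<in> carrier_mat p p" "B' \<in> carrier_mat M M"
  shows "mip (p * M) (kron A B) (kron A' B') = mip p A A' * mip M B B'"
proof -
  have "mip (p * M) (kron A B) (kron A' B') =
    (\<Sum>a<p. \<Sum>b<M. \<Sum>a'<p. \<Sum>b'<M. cnj (kron A B $$ (b + M * a, b' + M * a')) * kron A' B' $$ (b + M * a, b' + M * a'))"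
    unfolding mip_def by (simp add: sum_split_mult)
  also have "\<dots> = (\<Sum>a<p. \<Sum>b<M. \<Sum>a'<p. \<Sum>b'<M. (cnj (A $$ (a,a')) * A' $$ (a,a')) * (cnj (B $$ (b,b')) * B' $$ (b,b')))"
    using assms by (intro sum.cong refl) (simp add: kron_index[OF assms(1,2)] kron_index[OF assms(3,4)])
  also have "\<dots> = (\<Sum>a<p. \<Sum>a'<p. \<Sum>b<M. \<Sum>b'<M. (cnj (A $$ (a,a')) * A' $$ (a,a')) * (cnj (B $$ (b,b')) * B' $$ (b,b')))"
    by (rule sum.cong[OF refl], rule sum.swap)
  also have "\<dots> = mip p A A' * mip M B B'"
    by (simp only: mip_def sum_distrib_right) (simp only: sum_distrib_left)
  finally show ?thesis .
qed

lemma sum2: "(\<Sum>a<(2::nat). f a) = f 0 + f 1"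
  by (simp add: numeral_2_eq_2)

lemma pauli1_on:
  assumes "a < 4" "b < 4"
  shows "mip 2 (pauli1 a) (pauli1 b) = (if a = b then 2 else 0)"
proof -
  have "a \<in> {0,1,2,3}" "b \<in> {0,1,2,3}" using assms by auto
  thus ?thesis
    unfolding mip_def sum2 by (auto simp: pauli1_def mat_of_rows_list_def)
qed

lemma pauli_on:
  assumes "set xs \<subseteq> {0..<4}" "set ys \<subseteq> {0..<4}" "length xs = length ys"
  shows "mip (2 ^ length xs) (pauli_string xs) (pauli_string ys) = (if xs = ys then 2 ^ length xs else 0)"
  using assms
proof (induction xs arbitrary: ys)
  case Nil
  then show ?case by (simp add: mip_def)
next
  case (Cons a xs)
  then obtain b ys' where ys: "ys = b # ys'" by (cases ys) auto
  have "mip (2 ^ length (a # xs)) (pauli_string (a # xs)) (pauli_string ys)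
       = mip 2 (pauli1 a) (pauli1 b) * mip (2 ^ length xs) (pauli_string xs) (pauli_string ys')"
  proof -
    have c: "pauli_string ys' \<in> carrier_mat (2 ^ length xs) (2 ^ length xs)"
      using pauli_string_carrier[of ys'] Cons.prems ys by simp
    show ?thesis unfolding ys
      using mip_kron[OF pauli1_carrier[of a] pauli_string_carrier[of xs] pauli1_carrier[of b] c] by simp
  qed
  also have "\<dots> = (if a # xs = ys then 2 ^ length (a # xs) else 0)"
    using Cons ys by (simp add: pauli1_on)
  finally show ?case .
qed



definition GG :: "nat \<Rightarrow> nat \<Rightarrow> complex mat \<Rightarrow> nat \<Rightarrow> nat \<Rightarrow> nat \<Rightarrow> complex" where
  "GG N k U t i s = (if s + t < k then (if dg N (s+t) i = dg N (k+s+t) i then 1 else 0)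
                     else U $$ (dg N (s+t-k) i, dg N (s+t) i))"

definition cc :: "nat \<Rightarrow> nat \<Rightarrow> complex" where
  "cc N k = complex_of_real (1 / sqrt (real N) ^ k)"

definition inv_st :: "nat \<Rightarrow> nat \<Rightarrow> complex mat \<Rightarrow> nat \<Rightarrow> nat \<Rightarrow> complex" where
  "inv_st N k U t i = cc N k * (\<Prod>s<k. GG N k U t i s)"

definition pperm :: "nat \<Rightarrow> nat \<Rightarrow> nat \<Rightarrow> nat" where
  "pperm N k j = j div N + N ^ (2*k-1) * (j mod N)"

definition Rm :: "nat \<Rightarrow> nat \<Rightarrow> complex mat" where
  "Rm N k = mat (N ^ (2*k)) (N ^ (2*k)) (\<lambda>(j,i). if i = pperm N k j then 1 else 0)"

lemma Npow: "k \<ge> 1 \<Longrightarrow> N ^ (2*k) = N * N ^ (2*k-1)"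
  by (cases k) simp_all

lemma dg_div: "dg N d (j div N) = dg N (Suc d) j"
  by (simp add: dg_def div_mult2_eq power_Suc)

lemma lt_mult_add: "(b::nat) < M \<Longrightarrow> a < p \<Longrightarrow> b + M * a < p * M"
proof -
  assume "b < M" "a < p"
  hence "b + M * a < M + M * a" by linarith
  also have "\<dots> = M * Suc a" by simp
  also have "\<dots> \<le> M * p" using \<open>a < p\<close> by (intro mult_le_mono2) simp
  finally show ?thesis by (simp add: mult.commute)
qed

lemma pperm_lt:
  assumes "k \<ge> 1" "N > 0" "j < N ^ (2*k)"
  shows "pperm N k j < N ^ (2*k)" "j div N < N ^ (2*k-1)"
proof -
  show 1: "j div N < N ^ (2*k-1)" using assms Npow[OF assms(1), of N]
    by (simp add: less_mult_imp_div_less mult.commute)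
  show "pperm N k j < N ^ (2*k)"
    unfolding pperm_def Npow[OF assms(1)] using 1 assms(2) by (intro lt_mult_add) simp_all
qed

lemma Q_apply:
  assumes U: "U \<in> carrier_mat N N" and "b0 < m" "a0 < N"
    and v: "dim_vec v = N * m"
  shows "(kron U (1\<^sub>m m) *\<^sub>v v) $ (b0 + m * a0) = (\<Sum>a<N. U $$ (a0, a) * v $ (b0 + m * a))"
proof -
  have lt: "b0 + m * a0 < N * m" using assms by (intro lt_mult_add)
  have dr: "dim_row (kron U (1\<^sub>m m)) = N * m" using U by (simp add: kron_def)
  have "(kron U (1\<^sub>m m) *\<^sub>v v) $ (b0 + m * a0) = (\<Sum>l<N * m. kron U (1\<^sub>m m) $$ (b0 + m * a0, l) * v $ l)"
  proof -
    have dc: "dim_col (kron U (1\<^sub>m m)) = N * m" using U by (simp add: kron_def)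
    show ?thesis using lt dr dc v by (simp add: scalar_prod_def atLeast0LessThan)
  qed
  also have "\<dots> = (\<Sum>a<N. \<Sum>b<m. kron U (1\<^sub>m m) $$ (b0 + m * a0, b + m * a) * v $ (b + m * a))"
    by (rule sum_split_mult)
  also have "\<dots> = (\<Sum>a<N. \<Sum>b<m. U $$ (a0, a) * (if b0 = b then 1 else 0) * v $ (b + m * a))"
    using assms by (intro sum.cong refl) (simp add: kron_index[OF U one_carrier_mat])
  also have "\<dots> = (\<Sum>a<N. \<Sum>b<m. if b0 = b then U $$ (a0, a) * v $ (b + m * a) else 0)"
    by (intro sum.cong refl) auto
  also have "\<dots> = (\<Sum>a<N. U $$ (a0, a) * v $ (b0 + m * a))"
    using assms by (simp add: sum.delta)
  finally show ?thesis .
qed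

lemma R_apply:
  assumes "k \<ge> 1" "N > 0" "j < N ^ (2*k)" "dim_vec w = N ^ (2*k)"
  shows "(Rm N k *\<^sub>v w) $ j = w $ (pperm N k j)"
proof -
  have p: "pperm N k j < N ^ (2*k)" using pperm_lt assms by blast
  have "(Rm N k *\<^sub>v w) $ j = (\<Sum>i\<in>{0..<N ^ (2*k)}. (if i = pperm N k j then 1 else 0) * w $ i)"
    using assms by (simp add: Rm_def scalar_prod_def)
  also have "\<dots> = (\<Sum>i\<in>{0..<N ^ (2*k)}. if i = pperm N k j then w $ i else 0)"
    by (intro sum.cong) auto
  also have "\<dots> = w $ (pperm N k j)" using p by (simp add: sum.delta')
  finally show ?thesis .
qed

lemma idx_digits:
  assumes "k \<ge> 1" "N > 0" "j < N ^ (2*k)" "a < N"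
  shows "d < 2*k-1 \<Longrightarrow> dg N d (j div N + N ^ (2*k-1) * a) = dg N (Suc d) j"
    and "dg N (2*k-1) (j div N + N ^ (2*k-1) * a) = a"
proof -
  have x: "j div N < N ^ (2*k-1)" using pperm_lt assms by blast
  show "d < 2*k-1 \<Longrightarrow> dg N d (j div N + N ^ (2*k-1) * a) = dg N (Suc d) j"
    using dg_split[OF x assms(2), of d a] by (simp add: dg_div)
  show "dg N (2*k-1) (j div N + N ^ (2*k-1) * a) = a"
    using dg_split[OF x assms(2), of "2*k-1" a] assms by (simp add: dg_def)
qed

lemma GG_prod_step:
  assumes k: "k \<ge> 1" and N: "N > 0" and j: "j < N ^ (2*k)" and a: "a < N" and t: "t < k"
  shows "(\<Prod>s<k. GG N k U t (j div N + N ^ (2*k-1) * a) s)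
       = (if dg N k j = a then 1 else 0) * (\<Prod>s\<in>{..<k} - {k-1-t}. GG N k U (Suc t) j s)"
proof -
  let ?i = "j div N + N ^ (2*k-1) * a"
  note D1 = idx_digits(1)[OF k N j a] and D2 = idx_digits(2)[OF k N j a]
  have s0: "k - 1 - t \<in> {..<k}" using t by auto
  have "(\<Prod>s<k. GG N k U t ?i s) = GG N k U t ?i (k-1-t) * (\<Prod>s\<in>{..<k} - {k-1-t}. GG N k U t ?i s)"
    using prod.remove[OF _ s0] by simp
  also have "GG N k U t ?i (k-1-t) = (if dg N k j = a then 1 else 0)"
  proof -
    have e1: "k - 1 - t + t = k - 1" "k + (k - 1 - t) + t = 2*k-1" using t k by auto
    have "dg N (k-1) ?i = dg N k j" using D1[of "k-1"] k by simp
    thus ?thesis using t e1 D2 unfolding GG_def by auto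
  qed
  also have "(\<Prod>s\<in>{..<k} - {k-1-t}. GG N k U t ?i s) = (\<Prod>s\<in>{..<k} - {k-1-t}. GG N k U (Suc t) j s)"
  proof (rule prod.cong[OF refl])
    fix s assume s: "s \<in> {..<k} - {k-1-t}"
    show "GG N k U t ?i s = GG N k U (Suc t) j s"
    proof (cases "s + t < k")
      case True
      hence st: "s + Suc t < k" using s by auto
      have "dg N (s+t) ?i = dg N (Suc (s+t)) j" "dg N (k+s+t) ?i = dg N (Suc (k+s+t)) j"
        using D1 st by auto
      thus ?thesis using True st unfolding GG_def by simp
    next
      case False
      have "dg N (s+t-k) ?i = dg N (Suc (s+t-k)) j" "dg N (s+t) ?i = dg N (Suc (s+t)) j"
        using D1 s t by auto
      moreover have "Suc (s+t-k) = s + Suc t - k" using False by auto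
      ultimately show ?thesis using False unfolding GG_def by simp
    qed
  qed
  finally show ?thesis .
qed

lemma step:
  assumes U: "U \<in> carrier_mat N N" and N: "N > 0" and k: "k \<ge> 1" and t: "t < k"
  shows "Rm N k *\<^sub>v (kron U (1\<^sub>m (N^(2*k-1))) *\<^sub>v vec (N^(2*k)) (inv_st N k U t))
       = vec (N^(2*k)) (inv_st N k U (Suc t))"
proof (rule eq_vecI)
  let ?m = "N^(2*k-1)"
  let ?Q = "kron U (1\<^sub>m ?m)"
  let ?v = "vec (N^(2*k)) (inv_st N k U t)"
  have D: "N^(2*k) = N * ?m" by (rule Npow[OF k])
  have dimQ: "dim_row ?Q = N * ?m" using U by (simp add: kron_def)
  show "dim_vec (Rm N k *\<^sub>v (?Q *\<^sub>v ?v)) = dim_vec (vec (N^(2*k)) (inv_st N k U (Suc t)))"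
    by (simp add: Rm_def)
  fix j assume "j < dim_vec (vec (N^(2*k)) (inv_st N k U (Suc t)))"
  hence j: "j < N^(2*k)" by simp
  have jd: "j div N < ?m" using pperm_lt[OF k N j] by blast
  have jm: "j mod N < N" using N by simp
  let ?s0 = "k - 1 - t"
  let ?R = "\<Prod>s\<in>{..<k} - {?s0}. GG N k U (Suc t) j s"
  have "(Rm N k *\<^sub>v (?Q *\<^sub>v ?v)) $ j = (?Q *\<^sub>v ?v) $ (j div N + ?m * (j mod N))"
    using R_apply[OF k N j] dimQ D by (simp add: pperm_def)
  also have "\<dots> = (\<Sum>a<N. U $$ (j mod N, a) * ?v $ (j div N + ?m * a))"
    using Q_apply[OF U jd jm] D by simp
  also have "\<dots> = (\<Sum>a<N. U $$ (j mod N, a) * (cc N k * ((if dg N k j = a then 1 else 0) * ?R)))"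
  proof (rule sum.cong[OF refl])
    fix a assume a: "a \<in> {..<N}"
    have "j div N + ?m * a < N^(2*k)" unfolding D using jd a by (intro lt_mult_add) auto
    thus "U $$ (j mod N, a) * ?v $ (j div N + ?m * a) = U $$ (j mod N, a) * (cc N k * ((if dg N k j = a then 1 else 0) * ?R))"
      using GG_prod_step[OF k N j _ t, of a U] a by (simp add: inv_st_def)
  qed
  also have "\<dots> = (\<Sum>a<N. if dg N k j = a then U $$ (j mod N, a) * cc N k * ?R else 0)"
    by (intro sum.cong refl) auto
  also have "\<dots> = U $$ (j mod N, dg N k j) * cc N k * ?R"
    using N by (simp add: sum.delta dg_def)
  also have "\<dots> = inv_st N k U (Suc t) j"
  proof -
    have s0: "?s0 \<in> {..<k}" using t by auto
    have "GG N k U (Suc t) j ?s0 = U $$ (j mod N, dg N k j)"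
    proof -
      have "?s0 + Suc t = k" using t by auto
      thus ?thesis unfolding GG_def by (simp add: dg_def)
    qed
    thus ?thesis unfolding inv_st_def using prod.remove[OF _ s0, of "GG N k U (Suc t) j"]
      by (simp add: mult_ac)
  qed
  also have "\<dots> = vec (N^(2*k)) (inv_st N k U (Suc t)) $ j" using j by simp
  finally show "(Rm N k *\<^sub>v (?Q *\<^sub>v ?v)) $ j = vec (N^(2*k)) (inv_st N k U (Suc t)) $ j" .
qed



lemma run_rep: "run_ops Q (replicate t R) v = ((\<lambda>v. R *\<^sub>v (Q *\<^sub>v v)) ^^ t) v"
  by (induction t arbitrary: v) (simp_all only: replicate.simps run_ops.simps funpow_Suc_right comp_def funpow_0 id_apply)

lemma evolve:
  assumes U: "U \<in> carrier_mat N N" and N: "N > 0" and k: "k \<ge> 1"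
  shows "t \<le> k \<Longrightarrow> ((\<lambda>v. Rm N k *\<^sub>v (kron U (1\<^sub>m (N^(2*k-1))) *\<^sub>v v)) ^^ t) (vec (N^(2*k)) (inv_st N k U 0))
     = vec (N^(2*k)) (inv_st N k U t)"
proof (induction t)
  case 0 then show ?case by simp
next
  case (Suc t)
  then show ?case using step[OF U N k, of t] by simp
qed

lemma inv_st_0: "inv_st N k U 0 i = cc N k * (\<Prod>s<k. if dg N s i = dg N (k+s) i then 1 else 0)"
  unfolding inv_st_def GG_def by simp

lemma inv_st_k: "inv_st N k U k i = cc N k * (\<Prod>s<k. U $$ (dg N s i, dg N (k+s) i))"
  unfolding inv_st_def GG_def by (simp add: add.commute)

lemma cc_sq: "N > 0 \<Longrightarrow> cnj (cc N k) * cc N k = 1 / of_nat N ^ k"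
proof -
  assume N: "N > 0"
  have "(1 / sqrt (real N) ^ k) * (1 / sqrt (real N) ^ k) = 1 / real N ^ k"
  proof -
    have "sqrt (real N) ^ k * sqrt (real N) ^ k = (sqrt (real N) * sqrt (real N)) ^ k"
      by (rule power_mult_distrib[symmetric])
    also have "\<dots> = real N ^ k" by simp
    finally show ?thesis by simp
  qed
  hence "complex_of_real ((1 / sqrt (real N) ^ k) * (1 / sqrt (real N) ^ k)) = 1 / of_nat N ^ k"
    by simp
  thus ?thesis unfolding cc_def by (simp only: of_real_mult complex_cnj_complex_of_real)
qed

lemma csum:
  assumes N: "N > 0"
  shows "(\<Sum>i<N^(2*k). cnj (cc N k * (\<Prod>s<k. f (dg N s i) (dg N (k+s) i))) * (cc N k * (\<Prod>s<k. g (dg N s i) (dg N (k+s) i))))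
     = (\<Sum>a<N. \<Sum>b<N. cnj (f a b) * g a b) ^ k / of_nat N ^ k"
proof -
  have "(\<Sum>i<N^(2*k). cnj (cc N k * (\<Prod>s<k. f (dg N s i) (dg N (k+s) i))) * (cc N k * (\<Prod>s<k. g (dg N s i) (dg N (k+s) i))))
     = (\<Sum>i<N^(2*k). (cnj (cc N k) * cc N k) * (\<Prod>s<k. cnj (f (dg N s i) (dg N (k+s) i)) * g (dg N s i) (dg N (k+s) i)))"
    by (intro sum.cong refl) (simp add: prod.distrib mult_ac)
  also have "\<dots> = (cnj (cc N k) * cc N k) * (\<Sum>a<N. \<Sum>b<N. cnj (f a b) * g a b) ^ k"
    using dig_pairs[OF N, of "\<lambda>a b. cnj (f a b) * g a b" k] by (simp add: sum_distrib_left[symmetric])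
  finally show ?thesis using cc_sq[OF N] by simp
qed



definition Xs :: "nat \<Rightarrow> nat list set" where
  "Xs n = {xs. length xs = n \<and> set xs \<subseteq> {0..<4}}"

definition wv :: "nat \<Rightarrow> nat \<Rightarrow> nat list \<Rightarrow> nat \<Rightarrow> complex" where
  "wv N k xs i = cc N k * (\<Prod>s<k. pauli_string xs $$ (dg N s i, dg N (k+s) i))"

definition Pm :: "nat \<Rightarrow> nat \<Rightarrow> complex mat" where
  "Pm n k = mat ((2^n)^(2*k)) ((2^n)^(2*k)) (\<lambda>(i,j). \<Sum>x\<in>Xs n. wv (2^n) k x i * cnj (wv (2^n) k x j))"

definition psi0 :: "nat \<Rightarrow> nat \<Rightarrow> complex vec" where
  "psi0 N k = vec (N^(2*k)) (\<lambda>i. cc N k * (\<Prod>s<k. if dg N s i = dg N (k+s) i then 1 else 0))"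

definition alg :: "nat \<Rightarrow> nat \<Rightarrow> qalg" where
  "alg n k = \<lparr>anc_dim = (2^n)^(2*k-1), init_state = psi0 (2^n) k,
     ops = 1\<^sub>m ((2^n)^(2*k)) # replicate k (Rm (2^n) k), accept_proj = Pm n k\<rparr>"

lemma finite_Xs: "finite (Xs n)"
  unfolding Xs_def using finite_lists_length_eq[of "{0..<4::nat}" n] by (simp add: conj_commute)

lemma wv_on:
  assumes k: "k \<ge> 1"
  shows "orthonormal {..<(2^n)^(2*k)} (Xs n) (wv (2^n) k)"
  unfolding orthonormal_def
proof (intro ballI)
  fix x y assume x: "x \<in> Xs n" and y: "y \<in> Xs n"
  have "ip {..<(2^n)^(2*k)} (wv (2^n) k x) (wv (2^n) k y) = (mip (2^n) (pauli_string x) (pauli_string y)) ^ k / of_nat (2^n) ^ k"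
    unfolding ip_def wv_def mip_def by (rule csum) simp
  also have "mip (2^n) (pauli_string x) (pauli_string y) = (if x = y then 2^n else 0)"
    using pauli_on[of x y] x y unfolding Xs_def by auto
  finally show "ip {..<(2^n)^(2*k)} (wv (2^n) k x) (wv (2^n) k y) = (if x = y then 1 else 0)"
    using k by simp
qed

lemma final_state_alg:
  assumes U: "U \<in> carrier_mat (2^n) (2^n)" and k: "k \<ge> 1"
  shows "final_state (alg n k) U = vec ((2^n)^(2*k)) (\<lambda>i. cc (2^n) k * (\<Prod>s<k. U $$ (dg (2^n) s i, dg (2^n) (k+s) i)))"
proof -
  have p: "psi0 (2^n) k = vec ((2^n)^(2*k)) (inv_st (2^n) k U 0)"
    unfolding psi0_def by (rule eq_vecI) (simp_all add: inv_st_0)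
  have "final_state (alg n k) U = run_ops (kron U (1\<^sub>m ((2^n)^(2*k-1)))) (replicate k (Rm (2^n) k)) (psi0 (2^n) k)"
    unfolding final_state_def alg_def by (simp add: psi0_def)
  also have "\<dots> = vec ((2^n)^(2*k)) (inv_st (2^n) k U k)"
    unfolding run_rep p using evolve[OF U _ k, of k] by simp
  also have "inv_st (2^n) k U k = (\<lambda>i. cc (2^n) k * (\<Prod>s<k. U $$ (dg (2^n) s i, dg (2^n) (k+s) i)))"
    by (rule ext, rule inv_st_k)
  finally show ?thesis .
qed

lemma accept_alg:
  assumes U: "U \<in> carrier_mat (2^n) (2^n)" and k: "k \<ge> 1"
  shows "accept_prob (alg n k) U = (\<Sum>x\<in>Xs n. (cmod (mip (2^n) (pauli_string x) U ^ k / of_nat (2^n) ^ k))\<^sup>2)"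
proof -
  let ?N = "2^n :: nat"
  let ?D = "?N^(2*k)"
  define f where "f i = cc ?N k * (\<Prod>s<k. U $$ (dg ?N s i, dg ?N (k+s) i))" for i
  define b where "b x = ip {..<?D} (wv ?N k x) f" for x
  have fs: "final_state (alg n k) U = vec ?D f" unfolding f_def by (rule final_state_alg[OF U k])
  have Pv: "(Pm n k *\<^sub>v vec ?D f) $ i = (\<Sum>x\<in>Xs n. wv ?N k x i * b x)" if i: "i < ?D" for i
  proof -
    have "(Pm n k *\<^sub>v vec ?D f) $ i = (\<Sum>l<?D. (\<Sum>x\<in>Xs n. wv ?N k x i * cnj (wv ?N k x l)) * f l)"
      using i by (simp add: Pm_def scalar_prod_def atLeast0LessThan)
    also have "\<dots> = (\<Sum>x\<in>Xs n. wv ?N k x i * b x)"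
      unfolding b_def ip_def by (simp add: sum_distrib_left sum_distrib_right mult_ac) (rule sum.swap)
    finally show ?thesis .
  qed
  have "accept_prob (alg n k) U = (\<Sum>i<?D. (cmod ((Pm n k *\<^sub>v vec ?D f) $ i))\<^sup>2)"
    unfolding accept_prob_def cvec_norm_def fs by (simp add: alg_def Pm_def sum_nonneg)
  also have "\<dots> = (\<Sum>i<?D. (cmod (\<Sum>x\<in>Xs n. wv ?N k x i * b x))\<^sup>2)"
    by (intro sum.cong refl) (simp add: Pv)
  also have "\<dots> = (\<Sum>x\<in>Xs n. (cmod (b x))\<^sup>2)"
    by (rule comb_norm[OF wv_on[OF k] finite_Xs])
  also have "\<dots> = (\<Sum>x\<in>Xs n. (cmod (mip ?N (pauli_string x) U ^ k / of_nat ?N ^ k))\<^sup>2)"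
  proof (rule sum.cong[OF refl])
    fix x
    have "b x = mip ?N (pauli_string x) U ^ k / of_nat ?N ^ k"
      unfolding b_def ip_def wv_def f_def mip_def by (rule csum) simp
    thus "(cmod (b x))\<^sup>2 = (cmod (mip ?N (pauli_string x) U ^ k / of_nat ?N ^ k))\<^sup>2" by simp
  qed
  finally show ?thesis .
qed



lemma divmod_aux: "(x::nat) < m \<Longrightarrow> (x + m * a) div m = a \<and> (x + m * a) mod m = x"
  by simp

lemma pperm_bij:
  assumes k: "k \<ge> 1" and N: "N > 0"
  shows "bij_betw (pperm N k) {..<N^(2*k)} {..<N^(2*k)}"
proof -
  let ?m = "N^(2*k-1)"
  have D: "N^(2*k) = N * ?m" by (rule Npow[OF k])
  have m: "?m > 0" using N by simp
  show ?thesis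
  proof (rule bij_betw_byWitness[where f' = "\<lambda>i. (i mod ?m) * N + i div ?m"])
    show "\<forall>j\<in>{..<N^(2*k)}. (pperm N k j mod ?m) * N + pperm N k j div ?m = j"
    proof
      fix j assume j: "j \<in> {..<N^(2*k)}"
      have jd: "j div N < ?m" using pperm_lt[OF k N] j by auto
      have "pperm N k j mod ?m = j div N" "pperm N k j div ?m = j mod N"
        using divmod_aux[OF jd, of "j mod N"] by (simp_all add: pperm_def)
      thus "(pperm N k j mod ?m) * N + pperm N k j div ?m = j" by simp
    qed
    show "\<forall>i\<in>{..<N^(2*k)}. pperm N k ((i mod ?m) * N + i div ?m) = i"
    proof
      fix i assume i: "i \<in> {..<N^(2*k)}"
      have id: "i div ?m < N" using i D by (simp add: less_mult_imp_div_less)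
      have "((i mod ?m) * N + i div ?m) div N = i mod ?m" "((i mod ?m) * N + i div ?m) mod N = i div ?m"
        using id N by simp_all
      thus "pperm N k ((i mod ?m) * N + i div ?m) = i" by (simp add: pperm_def)
    qed
    show "pperm N k ` {..<N^(2*k)} \<subseteq> {..<N^(2*k)}" using pperm_lt[OF k N] by auto
    show "(\<lambda>i. (i mod ?m) * N + i div ?m) ` {..<N^(2*k)} \<subseteq> {..<N^(2*k)}"
    proof (rule image_subsetI)
      fix i assume "i \<in> {..<N^(2*k)}"
      hence i: "i < N^(2*k)" by simp
      have id: "i div ?m < N" using i D by (simp add: less_mult_imp_div_less)
      have "i div ?m + N * (i mod ?m) < ?m * N" using id m by (intro lt_mult_add) simp_all
      thus "(i mod ?m) * N + i div ?m \<in> {..<N^(2*k)}" using D by (simp add: mult.commute)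
    qed
  qed
qed

lemma unitary_one: "unitary_mat d (1\<^sub>m d)"
proof -
  have "ctrans (1\<^sub>m d) = 1\<^sub>m d" unfolding ctrans_def by (rule eq_matI) auto
  thus ?thesis unfolding unitary_mat_def by simp
qed

lemma unitary_Rm:
  assumes k: "k \<ge> 1" and N: "N > 0"
  shows "unitary_mat (N^(2*k)) (Rm N k)"
proof -
  let ?D = "N^(2*k)"
  note bij = pperm_bij[OF k N]
  have inj: "inj_on (pperm N k) {..<?D}" using bij by (rule bij_betw_imp_inj_on)
  have ct: "ctrans (Rm N k) = mat ?D ?D (\<lambda>(i,j). if i = pperm N k j then 1 else 0)"
    unfolding ctrans_def Rm_def by (rule eq_matI) auto
  have c: "Rm N k \<in> carrier_mat ?D ?D" by (simp add: Rm_def)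
  have 1: "ctrans (Rm N k) * Rm N k = 1\<^sub>m ?D"
  proof (rule eq_matI)
    fix i l assume i: "i < dim_row (1\<^sub>m ?D)" and l: "l < dim_col (1\<^sub>m ?D)"
    have "(ctrans (Rm N k) * Rm N k) $$ (i,l) = (\<Sum>j<?D. (if i = pperm N k j then 1 else 0) * (if l = pperm N k j then 1 else 0))"
      unfolding ct using i l by (simp add: Rm_def scalar_prod_def atLeast0LessThan)
    also have "\<dots> = (\<Sum>p\<in>{..<?D}. (if i = p then 1 else 0) * (if l = p then 1 else 0))"
      using sum.reindex_bij_betw[OF bij, of "\<lambda>p. (if i = p then 1 else 0) * (if l = p then (1::complex) else 0)"] by simp
    also have "\<dots> = (\<Sum>p\<in>{..<?D}. if p = i then (if l = i then 1 else 0) else 0)"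
      by (intro sum.cong refl) auto
    also have "\<dots> = 1\<^sub>m ?D $$ (i,l)" using i l by (simp add: sum.delta')
    finally show "(ctrans (Rm N k) * Rm N k) $$ (i,l) = 1\<^sub>m ?D $$ (i,l)" .
  qed (simp_all add: ctrans_def Rm_def)
  have 2: "Rm N k * ctrans (Rm N k) = 1\<^sub>m ?D"
  proof (rule eq_matI)
    fix j l assume j: "j < dim_row (1\<^sub>m ?D)" and l: "l < dim_col (1\<^sub>m ?D)"
    have pj: "pperm N k j < ?D" "pperm N k l < ?D" using pperm_lt[OF k N] j l by auto
    have "(Rm N k * ctrans (Rm N k)) $$ (j,l) = (\<Sum>i<?D. (if i = pperm N k j then 1 else 0) * (if i = pperm N k l then 1 else 0))"
      unfolding ct using j l by (simp add: Rm_def scalar_prod_def atLeast0LessThan)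
    also have "\<dots> = (\<Sum>i<?D. if i = pperm N k j then (if pperm N k j = pperm N k l then 1 else 0) else 0)"
      by (intro sum.cong refl) auto
    also have "\<dots> = (if pperm N k j = pperm N k l then 1 else 0)" using pj by (simp add: sum.delta)
    also have "\<dots> = 1\<^sub>m ?D $$ (j,l)" using j l inj by (auto dest: inj_onD)
    finally show "(Rm N k * ctrans (Rm N k)) $$ (j,l) = 1\<^sub>m ?D $$ (j,l)" .
  qed (simp_all add: ctrans_def Rm_def)
  show ?thesis unfolding unitary_mat_def using c 1 2 by simp
qed



lemma Pm_herm: "ctrans (Pm n k) = Pm n k"
  unfolding ctrans_def Pm_def by (rule eq_matI) (auto simp: mult.commute)

lemma Pm_idem:
  assumes k: "k \<ge> 1"
  shows "Pm n k * Pm n k = Pm n k"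
proof (rule eq_matI)
  let ?N = "2^n :: nat"
  let ?D = "?N^(2*k)"
  let ?w = "wv ?N k"
  fix i j assume i: "i < dim_row (Pm n k)" and j: "j < dim_col (Pm n k)"
  hence i': "i < ?D" and j': "j < ?D" by (simp_all add: Pm_def)
  note on = wv_on[OF k, of n, unfolded orthonormal_def]
  have "(Pm n k * Pm n k) $$ (i,j) = (\<Sum>l<?D. (\<Sum>x\<in>Xs n. ?w x i * cnj (?w x l)) * (\<Sum>y\<in>Xs n. ?w y l * cnj (?w y j)))"
    using i' j' by (simp add: Pm_def scalar_prod_def atLeast0LessThan)
  also have "\<dots> = (\<Sum>x\<in>Xs n. \<Sum>y\<in>Xs n. ?w x i * cnj (?w y j) * (\<Sum>l<?D. cnj (?w x l) * ?w y l))"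
    by (simp add: sum_distrib_left sum_distrib_right mult_ac) (subst sum.swap, rule sum.cong[OF refl], subst sum.swap, simp)
  also have "\<dots> = (\<Sum>x\<in>Xs n. \<Sum>y\<in>Xs n. if x = y then ?w x i * cnj (?w y j) else 0)"
    using on unfolding ip_def by (intro sum.cong refl) auto
  also have "\<dots> = (\<Sum>x\<in>Xs n. ?w x i * cnj (?w x j))"
    using finite_Xs by (simp add: sum.delta)
  also have "\<dots> = Pm n k $$ (i,j)" using i' j' by (simp add: Pm_def)
  finally show "(Pm n k * Pm n k) $$ (i,j) = Pm n k $$ (i,j)" .
qed (simp_all add: Pm_def)

lemma psi0_norm:
  assumes N: "N > 0"
  shows "cvec_norm (psi0 N k) = 1"
proof -
  let ?f = "\<lambda>a b. if a = b then (1::complex) else 0"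
  have "complex_of_real (\<Sum>i<N^(2*k). (cmod (psi0 N k $ i))\<^sup>2)
     = (\<Sum>i<N^(2*k). cnj (cc N k * (\<Prod>s<k. ?f (dg N s i) (dg N (k+s) i))) * (cc N k * (\<Prod>s<k. ?f (dg N s i) (dg N (k+s) i))))"
    by (simp only: of_real_sum cmod_sq_cnj) (simp add: psi0_def)
  also have "\<dots> = (\<Sum>a<N. \<Sum>b<N. cnj (?f a b) * ?f a b) ^ k / of_nat N ^ k"
    by (rule csum[OF N])
  also have "(\<Sum>a<N. \<Sum>b<N. cnj (?f a b) * ?f a b) = of_nat N"
    by (simp add: if_distrib cong: if_cong)
  finally have "(\<Sum>i<N^(2*k). (cmod (psi0 N k $ i))\<^sup>2) = 1" using N
    by (metis (no_types, lifting) div_self of_nat_eq_0_iff of_real_eq_1_iff power_not_zero less_not_refl2)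
  thus ?thesis unfolding cvec_norm_def by (simp add: psi0_def)
qed

lemma valid_alg:
  assumes k: "k \<ge> 1"
  shows "valid_qalg n (alg n k)"
proof -
  let ?N = "2^n :: nat"
  have N: "?N > 0" by simp
  have d: "2 ^ n * anc_dim (alg n k) = ?N^(2*k)" using Npow[OF k, of ?N] by (simp add: alg_def)
  show ?thesis
    unfolding valid_qalg_def Let_def d
    using psi0_norm[OF N, of k] unitary_one unitary_Rm[OF k N] Pm_herm Pm_idem[OF k]
    by (auto simp: alg_def psi0_def Pm_def)
qed



lemma phase_exists: "\<exists>\<theta>\<in>{0..<2*pi}. exp (\<i> * complex_of_real \<theta>) * z = complex_of_real (cmod z)"
proof (cases "z = 0")
  case True
  thus ?thesis by (intro bexI[of _ 0]) auto
next
  case False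
  define a where "a = Arg z"
  have ab: "-pi < a" "a \<le> pi" using Arg_bounded[of z] by (auto simp: a_def)
  define \<theta> where "\<theta> = (if a \<le> 0 then -a else 2*pi - a)"
  have th: "\<theta> \<in> {0..<2*pi}" using ab by (auto simp: \<theta>_def)
  have c: "cis \<theta> = cis (-a)"
  proof (cases "a \<le> 0")
    case True thus ?thesis by (simp add: \<theta>_def)
  next
    case False
    have "cis (2*pi - a) = cis (2*pi) * cis (-a)" using cis_mult[of "2*pi" "-a"] by simp
    thus ?thesis using False by (simp add: \<theta>_def)
  qed
  have z: "z = complex_of_real (cmod z) * cis a" using rcis_cmod_Arg[of z] by (simp add: rcis_def a_def)
  have "exp (\<i> * complex_of_real \<theta>) * z = complex_of_real (cmod z) * (cis (-a) * cis a)"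
    by (subst z) (simp add: cis_conv_exp[symmetric] c mult_ac)
  also have "\<dots> = complex_of_real (cmod z)" by (simp add: cis_mult)
  finally show ?thesis using th by blast
qed

lemma frob_mip:
  assumes "A \<in> carrier_mat N N"
  shows "frob_norm A = sqrt (Re (mip N A A))"
proof -
  have "(\<Sum>i<dim_col A. (ctrans A * A) $$ (i,i)) = (\<Sum>i<N. \<Sum>l<N. cnj (A $$ (l,i)) * A $$ (l,i))"
    using assms by (intro sum.cong refl) (auto simp: ctrans_def scalar_prod_def atLeast0LessThan)
  also have "\<dots> = mip N A A" unfolding mip_def by (rule sum.swap)
  finally show ?thesis unfolding frob_norm_def by simp
qed

lemma frob_nonneg:
  assumes "A \<in> carrier_mat N N"
  shows "frob_norm A \<ge> 0"
proof -
  have "Re (mip N A A) \<ge> 0" unfolding mip_def by (simp add: sum_nonneg)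
  thus ?thesis using frob_mip[OF assms] by simp
qed

lemma unitary_mip:
  assumes "unitary_mat N U"
  shows "mip N U U = of_nat N"
proof -
  have U: "U \<in> carrier_mat N N" and cu: "ctrans U * U = 1\<^sub>m N" using assms unfolding unitary_mat_def by auto
  have "(\<Sum>l<N. cnj (U $$ (l,i)) * U $$ (l,i)) = 1" if i: "i < N" for i
  proof -
    have "(ctrans U * U) $$ (i,i) = 1" using cu i by simp
    thus ?thesis using U i by (simp add: ctrans_def scalar_prod_def atLeast0LessThan)
  qed
  hence "(\<Sum>i<N. \<Sum>l<N. cnj (U $$ (l,i)) * U $$ (l,i)) = of_nat N" by simp
  thus ?thesis unfolding mip_def by (subst sum.swap) simp
qed

lemma mip_cnj: "mip N B A = cnj (mip N A B)"
  unfolding mip_def by (simp add: mult.commute)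

lemma phase_bound:
  assumes U: "unitary_mat (2^n) U" and x: "x \<in> Xs n"
  shows "phase_dist n U (pauli_string x) \<le> sqrt (1 - cmod (mip (2^n) (pauli_string x) U) / 2^n)"
proof -
  let ?N = "2^n :: nat"
  let ?s = "pauli_string x"
  let ?z = "mip ?N ?s U"
  have Uc: "U \<in> carrier_mat ?N ?N" using U unfolding unitary_mat_def by auto
  have sc: "?s \<in> carrier_mat ?N ?N" using pauli_string_carrier[of x] x by (simp add: Xs_def)
  have ss: "mip ?N ?s ?s = of_nat ?N" using pauli_on[of x x] x by (simp add: Xs_def)
  have uu: "mip ?N U U = of_nat ?N" by (rule unitary_mip[OF U])
  obtain \<theta> where th: "\<theta> \<in> {0..<2*pi}" and e: "exp (\<i> * complex_of_real \<theta>) * ?z = complex_of_real (cmod ?z)"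
    using phase_exists by blast
  define c where "c = exp (\<i> * complex_of_real \<theta>)"
  have cc1: "cnj c * c = 1"
  proof -
    have "cmod c = 1" unfolding c_def by (simp add: cis_conv_exp[symmetric])
    thus ?thesis by (metis cmod_sq_cnj of_real_1 one_power2)
  qed
  let ?A = "c \<cdot>\<^sub>m U - ?s"
  have Ac: "?A \<in> carrier_mat ?N ?N" using Uc sc by (intro minus_carrier_mat smult_carrier_mat) auto
  have "mip ?N ?A ?A = (\<Sum>a<?N. \<Sum>b<?N. (cnj c * c) * (cnj (U $$ (a,b)) * U $$ (a,b))
        - cnj c * (cnj (U $$ (a,b)) * ?s $$ (a,b)) - c * (cnj (?s $$ (a,b)) * U $$ (a,b))
        + cnj (?s $$ (a,b)) * ?s $$ (a,b))"
    unfolding mip_def using Uc sc by (intro sum.cong refl) (simp add: algebra_simps)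
  also have "\<dots> = (cnj c * c) * mip ?N U U - cnj c * mip ?N U ?s - c * ?z + mip ?N ?s ?s"
    unfolding mip_def by (simp add: sum.distrib sum_subtractf sum_distrib_left)
  also have "\<dots> = 2 * of_nat ?N - 2 * complex_of_real (cmod ?z)"
  proof -
    have "cnj c * mip ?N U ?s = cnj (c * ?z)" by (simp add: mip_cnj[of _ U])
    thus ?thesis using cc1 uu ss e unfolding c_def by simp
  qed
  finally have AA: "Re (mip ?N ?A ?A) = 2 * ?N - 2 * cmod ?z" by simp
  have "phase_dist n U ?s \<le> frob_norm ?A / sqrt (2 * 2 ^ n)"
    unfolding phase_dist_def c_def
  proof (rule cINF_lower[OF _ th], rule bdd_belowI[of _ 0], clarsimp)
    fix t :: real
    have "exp (\<i> * complex_of_real t) \<cdot>\<^sub>m U - ?s \<in> carrier_mat ?N ?N"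
      using Uc sc by (intro minus_carrier_mat smult_carrier_mat) auto
    from frob_nonneg[OF this]
    show "0 \<le> frob_norm (exp (\<i> * complex_of_real t) \<cdot>\<^sub>m U - ?s) / sqrt (2 * 2 ^ n)" by simp
  qed
  also have "\<dots> = sqrt (2 * ?N - 2 * cmod ?z) / sqrt (2 * 2 ^ n)"
    using frob_mip[OF Ac] AA by simp
  also have "\<dots> = sqrt (1 - cmod ?z / 2^n)"
    by (simp add: real_sqrt_divide[symmetric] field_simps)
  finally show ?thesis .
qed



lemma ip_scaled:
  "ip ({..<N}\<times>{..<N}) (\<lambda>(a,b). s * A$$(a,b)) (\<lambda>(a,b). s * B$$(a,b)) = cnj s * s * mip N A B"
  unfolding ip_def mip_def sum_distrib_left sum.cartesian_product
  by (intro sum.cong) (auto simp: mult_ac)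

lemma bessel_pauli:
  assumes U: "unitary_mat (2^n) U"
  shows "(\<Sum>x\<in>Xs n. (cmod (mip (2^n) (pauli_string x) U) / 2^n)\<^sup>2) \<le> 1"
proof -
  let ?N = "2^n :: nat"
  let ?I = "{..<?N}\<times>{..<?N}"
  define s where "s = complex_of_real (1 / sqrt (real ?N))"
  have ss: "cnj s * s = 1 / of_nat ?N"
  proof -
    have "(1 / sqrt (real ?N)) * (1 / sqrt (real ?N)) = 1 / real ?N" by simp
    hence "complex_of_real ((1 / sqrt (real ?N)) * (1 / sqrt (real ?N))) = 1 / of_nat ?N" by simp
    thus ?thesis unfolding s_def by (simp only: of_real_mult complex_cnj_complex_of_real)
  qed
  define e where "e x = (\<lambda>(a,b). s * pauli_string x $$ (a,b))" for x
  define v where "v = (\<lambda>(a,b). s * U $$ (a,b))"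
  have on: "orthonormal ?I (Xs n) e"
    unfolding orthonormal_def
  proof (intro ballI)
    fix x y assume x: "x \<in> Xs n" and y: "y \<in> Xs n"
    have "ip ?I (e x) (e y) = cnj s * s * mip ?N (pauli_string x) (pauli_string y)"
      unfolding e_def by (rule ip_scaled)
    also have "mip ?N (pauli_string x) (pauli_string y) = (if x = y then of_nat ?N else 0)"
      using pauli_on[of x y] x y unfolding Xs_def by auto
    finally show "ip ?I (e x) (e y) = (if x = y then 1 else 0)" using ss by simp
  qed
  have "(\<Sum>x\<in>Xs n. (cmod (ip ?I (e x) v))\<^sup>2) \<le> (\<Sum>p\<in>?I. (cmod (v p))\<^sup>2)"
    by (rule bessel[OF on finite_Xs])
  also have "(\<Sum>p\<in>?I. (cmod (v p))\<^sup>2) = 1"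
  proof -
    have "complex_of_real (\<Sum>p\<in>?I. (cmod (v p))\<^sup>2) = ip ?I v v"
      unfolding ip_def by (simp only: of_real_sum cmod_sq_cnj)
    also have "\<dots> = cnj s * s * mip ?N U U" unfolding v_def by (rule ip_scaled)
    also have "\<dots> = 1" using ss unitary_mip[OF U] by simp
    finally show ?thesis by (simp only: of_real_eq_1_iff)
  qed
  also have "(\<Sum>x\<in>Xs n. (cmod (ip ?I (e x) v))\<^sup>2) = (\<Sum>x\<in>Xs n. (cmod (mip ?N (pauli_string x) U) / 2^n)\<^sup>2)"
  proof (rule sum.cong[OF refl])
    fix x
    have "ip ?I (e x) v = mip ?N (pauli_string x) U / of_nat ?N"
      unfolding e_def v_def ip_scaled ss by simp
    thus "(cmod (ip ?I (e x) v))\<^sup>2 = (cmod (mip ?N (pauli_string x) U) / 2^n)\<^sup>2"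
      by (simp add: norm_divide norm_power)
  qed
  finally show ?thesis .
qed



lemma pauli_in_group: "x \<in> Xs n \<Longrightarrow> pauli_string x \<in> pauli_group n"
proof -
  assume x: "x \<in> Xs n"
  have "pauli_string x = (\<i> ^ 0) \<cdot>\<^sub>m pauli_string x" by (rule eq_matI) auto
  moreover have "(0::nat) < 4" by simp
  ultimately show ?thesis using x unfolding pauli_group_def Xs_def by blast
qed

lemma accept_nonneg_terms: "0 \<le> (cmod z)\<^sup>2" by simp

lemma pauli_case:
  assumes U: "unitary_mat (2^n) U" and hp: "has_property n (pauli_group n) U" and k: "k \<ge> 1"
  shows "accept_prob (alg n k) U \<ge> 1"
proof -
  let ?N = "2^n :: nat"
  have Uc: "U \<in> carrier_mat ?N ?N" using U unfolding unitary_mat_def by auto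
  obtain \<theta> V where V: "V \<in> pauli_group n" and UV: "U = exp (\<i> * complex_of_real \<theta>) \<cdot>\<^sub>m V"
    using hp unfolding has_property_def by blast
  obtain j y where y: "y \<in> Xs n" and Vy: "V = (\<i> ^ j) \<cdot>\<^sub>m pauli_string y"
    using V unfolding pauli_group_def Xs_def by blast
  let ?s = "pauli_string y"
  define c where "c = exp (\<i> * complex_of_real \<theta>) * \<i> ^ j"
  have cm: "cmod c = 1" unfolding c_def by (simp add: cis_conv_exp[symmetric] norm_mult norm_power)
  have sc: "?s \<in> carrier_mat ?N ?N" using pauli_string_carrier[of y] y by (simp add: Xs_def)
  have ss: "mip ?N ?s ?s = of_nat ?N" using pauli_on[of y y] y by (simp add: Xs_def)
  have "mip ?N ?s U = c * mip ?N ?s ?s"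
    unfolding mip_def UV Vy c_def using sc by (simp add: sum_distrib_left mult_ac)
  hence z: "mip ?N ?s U = c * of_nat ?N" using ss by simp
  have one: "(cmod (mip ?N ?s U ^ k / of_nat ?N ^ k))\<^sup>2 = 1"
    unfolding z using cm by (simp add: norm_divide norm_power norm_mult power_mult_distrib)
  have "(cmod (mip ?N ?s U ^ k / of_nat ?N ^ k))\<^sup>2
      \<le> (\<Sum>x\<in>Xs n. (cmod (mip ?N (pauli_string x) U ^ k / of_nat ?N ^ k))\<^sup>2)"
    by (rule member_le_sum[OF y _ finite_Xs]) simp
  also have "\<dots> = accept_prob (alg n k) U" using accept_alg[OF Uc k] by simp
  finally show ?thesis using one by simp
qed

lemma pow_bound:
  fixes x :: real
  assumes "0 \<le> x" "x \<le> 1"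
  shows "(1 - x) ^ m * (1 + real m * x) \<le> 1"
proof -
  have "1 + real m * x \<le> (1 + x) ^ m" using Bernoulli_inequality[of x m] assms by simp
  hence "(1 - x) ^ m * (1 + real m * x) \<le> (1 - x) ^ m * (1 + x) ^ m"
    using assms by (intro mult_left_mono) simp_all
  also have "\<dots> = ((1 - x) * (1 + x)) ^ m" by (rule power_mult_distrib[symmetric])
  also have "((1 - x) * (1 + x)) ^ m = (1 - x\<^sup>2) ^ m"
  proof -
    have "(1 - x) * (1 + x) = 1 - x\<^sup>2" by (simp add: algebra_simps power2_eq_square)
    thus ?thesis by simp
  qed
  also have "\<dots> \<le> 1"
  proof -
    have "x\<^sup>2 \<le> 1" using assms by (simp add: power_le_one)
    thus ?thesis using assms by (intro power_le_one) simp_all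
  qed
  finally show ?thesis .
qed

lemma far_case:
  assumes U: "unitary_mat (2^n) U" and far: "eps_far n \<epsilon> (pauli_group n) U" and k: "k \<ge> 1"
    and e0: "0 < \<epsilon>" and e1: "\<epsilon> \<le> 1" and kk: "real (k - 1) * \<epsilon>\<^sup>2 \<ge> 1"
  shows "accept_prob (alg n k) U \<le> 1/3"
proof -
  let ?N = "2^n :: nat"
  have Uc: "U \<in> carrier_mat ?N ?N" using U unfolding unitary_mat_def by auto
  define r where "r x = cmod (mip ?N (pauli_string x) U) / 2^n" for x
  define t where "t = 1 - \<epsilon>\<^sup>2"
  have t0: "0 \<le> t" "t \<le> 1" using e0 e1 by (auto simp: t_def power_le_one)
  have r0: "0 \<le> r x" for x by (simp add: r_def)
  have rt: "r x \<le> t" if x: "x \<in> Xs n" for x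
  proof -
    have "\<epsilon> \<le> phase_dist n U (pauli_string x)" using far pauli_in_group[OF x] unfolding eps_far_def by blast
    also have "\<dots> \<le> sqrt (1 - r x)" unfolding r_def by (rule phase_bound[OF U x])
    finally have le: "\<epsilon> \<le> sqrt (1 - r x)" .
    hence "\<epsilon>\<^sup>2 \<le> (sqrt (1 - r x))\<^sup>2" using e0 by (intro power_mono) simp_all
    moreover have "1 - r x \<ge> 0"
    proof (rule ccontr)
      assume "\<not> 0 \<le> 1 - r x"
      hence "sqrt (1 - r x) < 0" by simp
      thus False using le e0 by linarith
    qed
    ultimately show ?thesis by (simp add: t_def)
  qed
  have "accept_prob (alg n k) U = (\<Sum>x\<in>Xs n. (r x)\<^sup>2 * ((r x)\<^sup>2) ^ (k - 1))"
  proof -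
    have "(cmod (mip ?N (pauli_string x) U ^ k / of_nat ?N ^ k))\<^sup>2 = (r x)\<^sup>2 * ((r x)\<^sup>2) ^ (k - 1)" for x
    proof -
      have "(cmod (mip ?N (pauli_string x) U ^ k / of_nat ?N ^ k))\<^sup>2 = ((r x) ^ k)\<^sup>2"
        by (simp add: r_def norm_divide norm_power power_divide)
      also have "\<dots> = ((r x)\<^sup>2) ^ k" by (metis power_mult mult.commute)
      also have "\<dots> = (r x)\<^sup>2 * ((r x)\<^sup>2) ^ (k - 1)" using k
        by (cases k) auto
      finally show ?thesis .
    qed
    thus ?thesis using accept_alg[OF Uc k] by simp
  qed
  also have "\<dots> \<le> (\<Sum>x\<in>Xs n. (r x)\<^sup>2 * (t\<^sup>2) ^ (k - 1))"
  proof (rule sum_mono)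
    fix x assume x: "x \<in> Xs n"
    have "(r x)\<^sup>2 \<le> t\<^sup>2" using rt[OF x] r0[of x] by (intro power_mono) auto
    hence "((r x)\<^sup>2) ^ (k - 1) \<le> (t\<^sup>2) ^ (k - 1)" by (rule power_mono[OF _ zero_le_power2])
    thus "(r x)\<^sup>2 * ((r x)\<^sup>2) ^ (k - 1) \<le> (r x)\<^sup>2 * (t\<^sup>2) ^ (k - 1)"
      by (intro mult_left_mono) auto
  qed
  also have "\<dots> = (\<Sum>x\<in>Xs n. (r x)\<^sup>2) * (t\<^sup>2) ^ (k - 1)" by (simp add: sum_distrib_right)
  also have "\<dots> \<le> 1 * (t\<^sup>2) ^ (k - 1)"
    using bessel_pauli[OF U] by (intro mult_right_mono) (simp_all add: r_def)
  also have "\<dots> = t ^ (2 * (k - 1))" by (simp only: mult_1 power_mult)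
  also have "\<dots> \<le> 1/3"
  proof -
    let ?m = "2 * (k - 1)"
    have "t ^ ?m * (1 + real ?m * \<epsilon>\<^sup>2) \<le> 1" unfolding t_def using e0 e1
      by (intro pow_bound) (simp_all add: power_le_one)
    moreover have "real ?m * \<epsilon>\<^sup>2 \<ge> 2"
    proof -
      have "real ?m * \<epsilon>\<^sup>2 = 2 * (real (k - 1) * \<epsilon>\<^sup>2)" by (simp only: of_nat_mult)
      thus ?thesis using kk by linarith
    qed
    moreover have "t ^ ?m \<ge> 0" using t0 by simp
    ultimately have "t ^ ?m * 3 \<le> t ^ ?m * (1 + real ?m * \<epsilon>\<^sup>2)"
      by (intro mult_left_mono) linarith+
    hence "t ^ ?m * 3 \<le> 1" using \<open>t ^ ?m * (1 + real ?m * \<epsilon>\<^sup>2) \<le> 1\<close> by linarith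
    thus ?thesis by simp
  qed
  finally show ?thesis .
qed



definition alg0 :: "nat \<Rightarrow> qalg" where
  "alg0 n = \<lparr>anc_dim = 1, init_state = vec (2^n) (\<lambda>i. if i = 0 then 1 else 0),
     ops = [1\<^sub>m (2^n)], accept_proj = 1\<^sub>m (2^n)\<rparr>"

lemma e0_norm: "cvec_norm (vec (2^n) (\<lambda>i. if i = 0 then 1 else 0)) = 1"
proof -
  have "(\<Sum>i<(2::nat)^n. (cmod (if i = 0 then 1 else 0 :: complex))\<^sup>2) = 1"
  proof -
    have "(\<Sum>i<(2::nat)^n. (cmod (if i = 0 then 1 else 0 :: complex))\<^sup>2) = (\<Sum>i<(2::nat)^n. if i = 0 then 1 else 0)"
      by (intro sum.cong refl) simp
    thus ?thesis by (simp add: sum.delta')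
  qed
  thus ?thesis unfolding cvec_norm_def by simp
qed

lemma valid_alg0: "valid_qalg n (alg0 n)"
proof -
  have "ctrans (1\<^sub>m (2^n)) = 1\<^sub>m (2^n)" using unitary_one unfolding ctrans_def by (intro eq_matI) auto
  thus ?thesis unfolding valid_qalg_def Let_def alg0_def
    using e0_norm[of n] unitary_one[of "2^n"] by auto
qed

lemma accept_alg0: "accept_prob (alg0 n) U = 1"
proof -
  have "final_state (alg0 n) U = vec (2^n) (\<lambda>i. if i = 0 then 1 else 0)"
    unfolding final_state_def alg0_def by simp
  thus ?thesis unfolding accept_prob_def using e0_norm[of n] by (simp add: alg0_def)
qed

lemma replicate0_Xs: "replicate n 0 \<in> Xs n"
  by (simp add: Xs_def set_replicate_conv_if)

lemma not_far_big:
  assumes U: "unitary_mat (2^n) U" and e: "\<epsilon> > 1"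
  shows "\<not> eps_far n \<epsilon> (pauli_group n) U"
proof
  assume far: "eps_far n \<epsilon> (pauli_group n) U"
  let ?x = "replicate n 0"
  have "\<epsilon> \<le> phase_dist n U (pauli_string ?x)"
    using far pauli_in_group[OF replicate0_Xs] unfolding eps_far_def by blast
  also have "\<dots> \<le> sqrt (1 - cmod (mip (2^n) (pauli_string ?x) U) / 2^n)"
    by (rule phase_bound[OF U replicate0_Xs])
  also have "\<dots> \<le> 1" by simp
  finally show False using e by simp
qed

theorem lemma3:
  "\<exists>C::real. C > 0 \<and>
     (\<forall>n::nat. \<forall>\<epsilon>::real. n \<ge> 1 \<longrightarrow> \<epsilon> > 0 \<longrightarrow>
        (\<exists>A. valid_qalg n A \<and> eps_tests n \<epsilon> (pauli_group n) A \<and>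
             real (num_queries A) \<le> C / \<epsilon>\<^sup>2))"
proof (intro exI[of _ 3] conjI allI impI)
  fix n :: nat and \<epsilon> :: real
  assume "n \<ge> 1" and e0: "\<epsilon> > 0"
  show "\<exists>A. valid_qalg n A \<and> eps_tests n \<epsilon> (pauli_group n) A \<and> real (num_queries A) \<le> 3 / \<epsilon>\<^sup>2"
  proof (cases "\<epsilon> \<le> 1")
    case True
    define k where "k = nat \<lceil>1 / \<epsilon>\<^sup>2\<rceil> + 1"
    have k: "k \<ge> 1" by (simp add: k_def)
    have e2: "\<epsilon>\<^sup>2 > 0" "\<epsilon>\<^sup>2 \<le> 1" using e0 True by (auto simp: power_le_one)
    have km1: "real (k - 1) = real (nat \<lceil>1 / \<epsilon>\<^sup>2\<rceil>)" by (simp add: k_def)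
    have p: "0 < 1 / \<epsilon>\<^sup>2" using e2 by simp
    have c0: "\<lceil>1 / \<epsilon>\<^sup>2\<rceil> \<ge> 0" unfolding zero_le_ceiling using p by linarith
    have cn: "real (nat \<lceil>1 / \<epsilon>\<^sup>2\<rceil>) = of_int \<lceil>1 / \<epsilon>\<^sup>2\<rceil>" using c0 by simp
    have ceil: "real (nat \<lceil>1 / \<epsilon>\<^sup>2\<rceil>) \<ge> 1 / \<epsilon>\<^sup>2"
      unfolding cn by (rule le_of_int_ceiling)
    have kk: "real (k - 1) * \<epsilon>\<^sup>2 \<ge> 1"
    proof -
      have "real (k - 1) * \<epsilon>\<^sup>2 \<ge> (1 / \<epsilon>\<^sup>2) * \<epsilon>\<^sup>2"
        using km1 ceil e2 by (intro mult_right_mono) auto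
      moreover have "(1 / \<epsilon>\<^sup>2) * \<epsilon>\<^sup>2 = 1" using e2 by simp
      ultimately show ?thesis by linarith
    qed
    have tests: "eps_tests n \<epsilon> (pauli_group n) (alg n k)"
      unfolding eps_tests_def
      using pauli_case[OF _ _ k] far_case[OF _ _ k e0 True kk] by fastforce
    have nq: "num_queries (alg n k) = k" by (simp add: num_queries_def alg_def)
    have "real k \<le> 1 / \<epsilon>\<^sup>2 + 2"
    proof -
      have "real (nat \<lceil>1 / \<epsilon>\<^sup>2\<rceil>) \<le> 1 / \<epsilon>\<^sup>2 + 1"
        unfolding cn using ceiling_correct[of "1 / \<epsilon>\<^sup>2"] by linarith
      moreover have "real k = real (nat \<lceil>1 / \<epsilon>\<^sup>2\<rceil>) + 1" by (simp only: k_def of_nat_add of_nat_1)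
      ultimately show ?thesis by linarith
    qed
    also have "\<dots> \<le> 3 / \<epsilon>\<^sup>2"
    proof -
      have "1 \<le> 1 / \<epsilon>\<^sup>2" using e2 by simp
      thus ?thesis by simp
    qed
    finally show ?thesis using valid_alg[OF k, of n] tests nq by (intro exI[of _ "alg n k"]) auto
  next
    case False
    have tests: "eps_tests n \<epsilon> (pauli_group n) (alg0 n)"
      unfolding eps_tests_def using accept_alg0 not_far_big False by auto
    have "num_queries (alg0 n) = 0" by (simp add: num_queries_def alg0_def)
    thus ?thesis using valid_alg0 tests by (intro exI[of _ "alg0 n"]) auto
  qed
qed (simp)


end
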